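(* Let the graph inverse semigroup $G(T)$ of the unary tree $T$ be a dense subsemigroup of a CLP-compact topological semigroup $S$. Then for every open neighborhood $U$ of $0$ in $S$ there exists $n\in\omega$ such that $L_k\subset U$ for every $k>n$.
   Context: All spaces are Hausdorff; CLP-compact means every cover by clopen sets has a finite subcover. The unary tree $T$ has vertex set $\omega$ and edges $(n,n+1)$ with source $n$ and range $n+1$. For $k\le p$, $(k,p)$ denotes the unique path from $k$ to $p$ (with $(n,n)$ the vertex $n$). The graph inverse semigroup $G(T)$ is the semigroup with zero $0$ generated by the vertices, the edges and formal inverses $e^{-1}$ of edges subject to: for vertices $a,b$: $ab=a$ if $a=b$, else $0$; for edges $e,f$: $s(e)e=er(e)=e$, $e^{-1}s(e)=r(e)e^{-1}=e^{-1}$, $e^{-1}f=r(e)$ if $e=f$, else $0$. For $n\in\omega$, $L_n=\{(n,m)(n,m)^{-1}\mid m\ge n\}\cup\{0\}$. *)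

theory Defs
  imports "HOL-Analysis.Analysis"
begin

text \<open>Graph inverse semigroup G(T) of the unary tree T (vertices omega, edges (n,n+1)).
  Every nonzero element of a graph inverse semigroup is uniquely of the form u v^-1 with
  u, v paths having the same range.  For T the paths are (k,p), k <= p, so a nonzero element
  is (k,p)(m,p)^-1, encoded as Some (k,m,p) with k <= p and m <= p; the zero is None.\<close>

type_synonym gt = "(nat \<times> nat \<times> nat) option"

definition GT :: "gt set" where
  "GT = {None} \<union> {Some (k, m, p) | k m p. k \<le> p \<and> m \<le> p}"

fun gt_mult :: "gt \<Rightarrow> gt \<Rightarrow> gt" where
  "gt_mult (Some (k, m, p)) (Some (k', m', p')) =
     (if m = k' then Some (k, m', max p p') else None)"
| "gt_mult _ _ = None"

definition gt_vertex :: "nat \<Rightarrow> gt" where "gt_vertex n = Some (n, n, n)"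
definition gt_edge :: "nat \<Rightarrow> gt" where "gt_edge n = Some (n, Suc n, Suc n)"
definition gt_edge_inv :: "nat \<Rightarrow> gt" where "gt_edge_inv n = Some (Suc n, n, Suc n)"

definition L :: "nat \<Rightarrow> gt set" where
  "L n = {Some (n, n, m) | m. n \<le> m} \<union> {None}"

definition clp_compact :: "'a::topological_space set \<Rightarrow> bool" where
  "clp_compact X \<longleftrightarrow>
     (\<forall>\<U>. (\<forall>U\<in>\<U>. open U \<and> closed U) \<and> X \<subseteq> \<Union>\<U> \<longrightarrow>
        (\<exists>\<V>\<subseteq>\<U>. finite \<V> \<and> X \<subseteq> \<Union>\<V>))"

definition topological_semigroup :: "('a::topological_space \<Rightarrow> 'a \<Rightarrow> 'a) \<Rightarrow> bool" where
  "topological_semigroup smul \<longleftrightarrow>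
     (\<forall>x y z. smul (smul x y) z = smul x (smul y z)) \<and>
     continuous_on UNIV (\<lambda>q. smul (fst q) (snd q))"

end

theory Submission
  imports Defs
begin

lemma cont_mul:
  assumes "continuous_on UNIV (\<lambda>q. smul (fst q) (snd q))"
    and "continuous_on UNIV g" and "continuous_on UNIV h"
  shows "continuous_on UNIV (\<lambda>s. smul (g s) (h s))"
  using continuous_on_compose2[OF assms(1) continuous_on_Pair[OF assms(2,3)]] by simp

lemma GT_None [simp]: "None \<in> GT"
  unfolding GT_def by blast

lemma GT_Some [simp]: "Some (k, m, p) \<in> GT \<longleftrightarrow> k \<le> p \<and> m \<le> p"
  unfolding GT_def by blast

lemma gt_closed: "a \<in> GT \<Longrightarrow> b \<in> GT \<Longrightarrow> gt_mult a b \<in> GT"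
proof (cases a)
  case None then show ?thesis by simp
next
  case (Some t)
  obtain k m p where t: "t = (k,m,p)" by (cases t) auto
  assume a: "a \<in> GT" and b: "b \<in> GT"
  show ?thesis
  proof (cases b)
    case None then show ?thesis by (cases a) simp_all
  next
    case (Some t')
    obtain k' m' p' where t': "t' = (k',m',p')" by (cases t') auto
    have "k \<le> p" "m' \<le> p'" using a b \<open>a = Some t\<close> Some t t' by simp_all
    then show ?thesis using \<open>a = Some t\<close> Some t t' by (simp add: le_max_iff_disj)
  qed
qed

lemma gt_iso:
  assumes "y \<in> GT"
    and "gt_mult (gt_mult (Some(k,k,p)) y) (Some(k,k,p)) \<noteq>
         gt_mult (gt_mult (Some(k,k,Suc p)) y) (Some(k,k,Suc p))"
  shows "y \<in> (\<lambda>q. Some(k,k,q)) ` {k..p}"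
proof (cases y)
  case None then show ?thesis using assms(2) by simp
next
  case (Some t)
  obtain a b q where t: "t = (a,b,q)" by (cases t) auto
  show ?thesis
  proof (cases "a = k \<and> b = k")
    case True
    then have "max p q \<noteq> max (Suc p) q" using assms(2) Some t by auto
    then have "q \<le> p" by (simp add: max_def split: if_splits)
    moreover have "k \<le> q" using assms(1) Some t True by simp
    ultimately show ?thesis using Some t True by auto
  next
    case False
    then have "gt_mult (gt_mult (Some(k,k,p)) y) (Some(k,k,p)) = None"
      "gt_mult (gt_mult (Some(k,k,Suc p)) y) (Some(k,k,Suc p)) = None"
      using Some t by (cases "k = a"; simp)+
    then show ?thesis using assms(2) by simp
  qed
qed

lemma isolated:
  fixes smul :: "'a::t2_space \<Rightarrow> 'a \<Rightarrow> 'a" and f :: "gt \<Rightarrow> 'a"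
  assumes C: "continuous_on UNIV (\<lambda>q. smul (fst q) (snd q))"
    and inj: "inj_on f GT"
    and hom: "\<And>x y. x \<in> GT \<Longrightarrow> y \<in> GT \<Longrightarrow> f (gt_mult x y) = smul (f x) (f y)"
    and dense: "closure (f ` GT) = UNIV" and kp: "k \<le> p"
  shows "open {f (Some(k,k,p))}"
proof -
  define x where "x = Some(k,k,p)"
  define x' where "x' = Some(k,k,Suc p)"
  have xG: "x \<in> GT" "x' \<in> GT" using kp by (auto simp: x_def x'_def)
  have ne: "f x \<noteq> f x'"
  proof
    assume "f x = f x'"
    then have "x = x'" using inj xG unfolding inj_on_def by blast
    then show False by (simp add: x_def x'_def)
  qed
  obtain W1 W2 where W: "open W1" "open W2" "f x \<in> W1" "f x' \<in> W2" "W1 \<inter> W2 = {}"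
    using hausdorff[OF ne] by blast
  define g1 where "g1 = (\<lambda>s. smul (smul (f x) s) (f x))"
  define g2 where "g2 = (\<lambda>s. smul (smul (f x') s) (f x'))"
  have c1: "continuous_on UNIV g1" unfolding g1_def
    by (rule cont_mul[OF C cont_mul[OF C continuous_on_const continuous_on_id] continuous_on_const])
  have c2: "continuous_on UNIV g2" unfolding g2_def
    by (rule cont_mul[OF C cont_mul[OF C continuous_on_const continuous_on_id] continuous_on_const])
  define F where "F = f ` ((\<lambda>q. Some(k,k,q)) ` {k..<p})"
  define Ob where "Ob = (g1 -` W1 \<inter> g2 -` W2) - F"
  have oO: "open Ob" unfolding Ob_def F_def
    using continuous_imp_open_vimage[OF c1 _ W(1)] continuous_imp_open_vimage[OF c2 _ W(2)]
    by (intro open_Diff open_Int finite_imp_closed finite_imageI) auto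
  have g1y: "g1 (f y) = f (gt_mult (gt_mult x y) x)" if "y \<in> GT" for y
    using that xG by (simp add: g1_def hom gt_closed)
  have g2y: "g2 (f y) = f (gt_mult (gt_mult x' y) x')" if "y \<in> GT" for y
    using that xG by (simp add: g2_def hom gt_closed)
  have fxO: "f x \<in> Ob"
  proof -
    have "g1 (f x) = f x" using g1y[OF xG(1)] by (simp add: x_def)
    moreover have "g2 (f x) = f x'" using g2y[OF xG(1)] by (simp add: x_def x'_def)
    moreover have "f x \<notin> F"
    proof
      assume "f x \<in> F"
      then obtain q where q: "k \<le> q" "q < p" "f x = f (Some(k,k,q))" unfolding F_def by auto
      then have "Some(k,k,q) \<in> GT" by auto
      with q xG have "x = Some(k,k,q)" using inj by (auto simp: inj_on_def)
      then show False using q by (simp add: x_def)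
    qed
    ultimately show ?thesis using W(3,4) unfolding Ob_def by simp
  qed
  have sub: "Ob \<inter> f ` GT \<subseteq> {f x}"
  proof
    fix s assume "s \<in> Ob \<inter> f ` GT"
    then obtain y where y: "y \<in> GT" "s = f y" "f y \<in> Ob" by auto
    have "gt_mult (gt_mult x y) x \<noteq> gt_mult (gt_mult x' y) x'"
    proof
      assume eq: "gt_mult (gt_mult x y) x = gt_mult (gt_mult x' y) x'"
      have "g1 (f y) \<in> W1" "g2 (f y) \<in> W2" using y(3) unfolding Ob_def by auto
      then show False using g1y[OF y(1)] g2y[OF y(1)] eq W(5) by auto
    qed
    then obtain q where q: "k \<le> q" "q \<le> p" "y = Some(k,k,q)"
    proof -
      have "y \<in> (\<lambda>q. Some(k,k,q)) ` {k..p}"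
        using gt_iso[OF y(1), of k p] \<open>gt_mult (gt_mult x y) x \<noteq> gt_mult (gt_mult x' y) x'\<close>
        unfolding x_def x'_def by blast
      then show ?thesis using that by auto
    qed
    show "s \<in> {f x}"
    proof (cases "q = p")
      case True
      then have "y = x" using q(3) by (simp add: x_def)
      then show ?thesis using y(2) by simp
    next
      case False
      then have "q \<in> {k..<p}" using q(1,2) by simp
      then have "y \<in> (\<lambda>q. Some(k,k,q)) ` {k..<p}" using q(3) by (rule rev_image_eqI)
      then have "f y \<in> F" unfolding F_def by (metis imageI)
      moreover have "f y \<notin> F" using y(3) unfolding Ob_def by blast
      ultimately show ?thesis by contradiction
    qed
  qed
  have "Ob \<subseteq> closure (Ob \<inter> f ` GT)"
    using open_Int_closure_subset[OF oO, of "f ` GT"] unfolding dense by simp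
  also have "\<dots> \<subseteq> closure {f x}" by (rule closure_mono[OF sub])
  also have "\<dots> = {f x}" by (rule closure_closed) simp
  finally have "Ob \<subseteq> {f x}" .
  then have "Ob = {f x}" using fxO by blast
  then show ?thesis using oO by (simp add: x_def)
qed

theorem lemma4p6:
  fixes smul :: "'a::t2_space \<Rightarrow> 'a \<Rightarrow> 'a"
    and f :: "gt \<Rightarrow> 'a"
    and U :: "'a set"
  assumes "topological_semigroup smul"
    and "clp_compact (UNIV :: 'a set)"
    and "inj_on f GT"
    and "\<And>x y. x \<in> GT \<Longrightarrow> y \<in> GT \<Longrightarrow> f (gt_mult x y) = smul (f x) (f y)"
    and "closure (f ` GT) = UNIV"
    and "open U" and "f None \<in> U"
  shows "\<exists>n. \<forall>k>n. f ` L k \<subseteq> U"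
proof (rule ccontr)
  assume neg: "\<not> ?thesis"
  have C: "continuous_on UNIV (\<lambda>q. smul (fst q) (snd q))"
    using assms(1) by (simp add: topological_semigroup_def)
  have hom: "\<And>x y. x \<in> GT \<Longrightarrow> y \<in> GT \<Longrightarrow> f (gt_mult x y) = smul (f x) (f y)"
    by (rule assms(4))
  define K where "K = {k. \<not> f ` L k \<subseteq> U}"
  have infK: "infinite K"
    unfolding infinite_nat_iff_unbounded K_def using neg by auto
  have "\<forall>k\<in>K. \<exists>mm. k \<le> mm \<and> f (Some(k,k,mm)) \<notin> U"
    unfolding K_def L_def using assms(7) by auto
  then obtain m where m: "\<And>k. k \<in> K \<Longrightarrow> k \<le> m k \<and> f (Some(k,k,m k)) \<notin> U"
    by metis
  have mG: "Some(k,k,m k) \<in> GT" if "k \<in> K" for k using m[OF that] by auto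
  define b where "b = (\<lambda>k. f (Some(k,k,m k)))"
  define B where "B = b ` K"
  have injb: "inj_on b K"
  proof
    fix k k' assume "k \<in> K" "k' \<in> K" "b k = b k'"
    then have "Some(k,k,m k) = Some(k',k',m k')"
      using assms(3) mG unfolding b_def inj_on_def by blast
    then show "k = k'" by simp
  qed
  have infB: "infinite B" unfolding B_def using infK injb finite_imageD by blast
  have opensing: "open {b k}" if "k \<in> K" for k
    unfolding b_def using isolated[OF C assms(3) hom assms(5)] m[OF that] by blast
  have openB: "open B"
  proof -
    have "B = (\<Union>k\<in>K. {b k})" unfolding B_def by auto
    then show ?thesis using opensing by auto
  qed
  have notclosed: "\<not> closed B"
  proof
    assume cB: "closed B"
    define UU where "UU = insert (-B) ((\<lambda>y. {y}) ` B)"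
    have cl: "\<forall>V\<in>UU. open V \<and> closed V" unfolding UU_def
      using cB openB opensing unfolding B_def by auto
    have cov: "UNIV \<subseteq> \<Union>UU" unfolding UU_def by auto
    have "\<exists>VV\<subseteq>UU. finite VV \<and> UNIV \<subseteq> \<Union>VV"
      by (rule assms(2)[unfolded clp_compact_def, rule_format, OF conjI[OF cl cov]])
    then obtain VV where VV: "VV \<subseteq> UU" "finite VV" "UNIV \<subseteq> \<Union>VV"
      by blast
    have "B \<subseteq> \<Union>(VV - {-B})" using VV(3) by blast
    moreover have "finite (\<Union>(VV - {-B}))"
      using VV(1,2) unfolding UU_def by (intro finite_Union) auto
    ultimately show False using infB finite_subset by blast
  qed
  obtain z where z: "z \<in> closure B" "z \<notin> B"
    using notclosed closure_subset_eq closure_subset by blast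
  have "closure B \<subseteq> -U"
    using m assms(6) unfolding B_def b_def by (intro closure_minimal) auto
  then have zU: "z \<notin> U" using z by auto
  have "closure B \<subseteq> {s. smul s s = s}"
  proof (rule closure_minimal)
    show "B \<subseteq> {s. smul s s = s}"
    proof
      fix s assume "s \<in> B"
      then obtain k where k: "k \<in> K" "s = b k" unfolding B_def by auto
      show "s \<in> {s. smul s s = s}"
        using hom[OF mG[OF k(1)] mG[OF k(1)]] k by (simp add: b_def)
    qed
    show "closed {s. smul s s = s}"
      by (rule closed_Collect_eq[OF cont_mul[OF C continuous_on_id continuous_on_id] continuous_on_id])
  qed
  then have zz: "smul z z = z" using z by auto
  have zx: "smul z (f x) = f None" if xG: "x \<in> GT" for x
  proof -
    define K' where "K' = {k\<in>K. gt_mult (Some(k,k,m k)) x = None}"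
    have "K - K' \<subseteq> (case x of None \<Rightarrow> {} | Some t \<Rightarrow> {fst t})"
      unfolding K'_def by (cases x) auto
    then have finK: "finite (K - K')" by (rule finite_subset) (cases x, auto)
    have "B \<subseteq> b ` K' \<union> b ` (K - K')" unfolding B_def by auto
    then have "closure B \<subseteq> closure (b ` K' \<union> b ` (K - K'))" by (rule closure_mono)
    also have "\<dots> = closure (b ` K') \<union> closure (b ` (K - K'))" by (rule closure_Un)
    also have "closure (b ` (K - K')) = b ` (K - K')"
      using finK by (intro closure_closed finite_imp_closed finite_imageI)
    finally have "closure B \<subseteq> closure (b ` K') \<union> b ` (K - K')" .
    moreover have "b ` (K - K') \<subseteq> B" unfolding B_def by auto
    ultimately have zK': "z \<in> closure (b ` K')" using z by auto
    have "closure (b ` K') \<subseteq> {s. smul s (f x) = f None}"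
    proof (rule closure_minimal)
      show "b ` K' \<subseteq> {s. smul s (f x) = f None}"
      proof
        fix s assume "s \<in> b ` K'"
        then obtain k where k: "k \<in> K'" "s = b k" by auto
        then have kK: "k \<in> K" unfolding K'_def by auto
        show "s \<in> {s. smul s (f x) = f None}"
          using hom[OF mG[OF kK] xG] k unfolding K'_def b_def by simp
      qed
      show "closed {s. smul s (f x) = f None}"
        by (rule closed_Collect_eq[OF cont_mul[OF C continuous_on_id continuous_on_const] continuous_on_const])
    qed
    then show ?thesis using zK' by auto
  qed
  have "closure (f ` GT) \<subseteq> {s. smul z s = f None}"
  proof (rule closure_minimal)
    show "f ` GT \<subseteq> {s. smul z s = f None}" using zx by auto
    show "closed {s. smul z s = f None}"
      by (rule closed_Collect_eq[OF cont_mul[OF C continuous_on_const continuous_on_id] continuous_on_const])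
  qed
  then have "smul z z = f None" using assms(5) by auto
  then have "z = f None" using zz by simp
  then show False using zU assms(7) by simp
qed

end
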